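(* The algorithm SCHEMATIC-ALGO$(G,\mu^*,m^*,\Delta^*,\gamma)$ (described in the context) runs for at most $O(\beta^2\cdot\mu(G))$ rounds.
   Context: Let $G=(V,E)$ be a graph with $n$ vertices, $m$ edges, average degree $d$; $\mu(G)$ is its maximum matching size. Fix a small constant $\epsilon\in(0,1)$ and $\beta:=1/\Theta(\epsilon^3)$. For $H\subseteq E$ and a pair $e=(u,v)$, $\deg_e(H):=\deg_u(H)+\deg_v(H)$. An edge $e$ is underfull w.r.t. $H$ if $\deg_e(H)<(1-\epsilon)\beta$ and overfull w.r.t. $H$ if $\deg_e(H)>\beta$. The parameters satisfy $\mu(G)/(2+\epsilon)\le\mu^*\le n$, $d\le\Delta^*\le n$, $m^*\ge m$, $0<\gamma<1$. SCHEMATIC-ALGO: set $H\leftarrow\emptyset$. Repeat rounds: in each round set Status $\leftarrow$ false; for $i=1,\dots,(100m^*\log n)/(\mu^*(\Delta^* )^\gamma)$, sample an edge $e\in E$ uniformly at random (independently, with repetition); if $e\in E\setminus H$ and $e$ is underfull w.r.t. $H$, then set Status $\leftarrow$ true, $H\leftarrow H\cup\{e\}$, and then while some edge of $H$ is overfull w.r.t. $H$, remove such an edge from $H$. If at the end of a round Status is false, stop the rounds (this is the last round). Then let $U$ be the set of edges of $E\setminus H$ underfull w.r.t. $H$, take any $V_{small}\subseteq V$ with $\{v:\deg_v(U)\le (1-\epsilon)(\Delta^* )^\gamma/\epsilon\}\subseteq V_{small}\subseteq\{v:\deg_v(U)\le(1+\epsilon)(\Delta^* )^\gamma/\epsilon\}$,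 let $E_{small}:=\{(u,v)\in H\cup U: u,v\in V_{small}\}$, and return $\mu(E_{small})$. *)

theory Defs
  imports Complex_Main
begin

definition simple_graph :: "'a set \<Rightarrow> 'a set set \<Rightarrow> bool" where
  "simple_graph V E \<longleftrightarrow> finite V \<and> (\<forall>e\<in>E. \<exists>u v. e = {u, v} \<and> u \<noteq> v \<and> u \<in> V \<and> v \<in> V)"

definition matching :: "'a set set \<Rightarrow> bool" where
  "matching M \<longleftrightarrow> (\<forall>e1\<in>M. \<forall>e2\<in>M. e1 \<noteq> e2 \<longrightarrow> e1 \<inter> e2 = {})"

definition max_matching :: "'a set set \<Rightarrow> nat" where
  "max_matching E = Max {card M | M. M \<subseteq> E \<and> matching M}"

definition avg_degree :: "'a set \<Rightarrow> 'a set set \<Rightarrow> real" where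
  "avg_degree V E = 2 * real (card E) / real (card V)"

definition vdeg :: "'a \<Rightarrow> 'a set set \<Rightarrow> nat" where
  "vdeg v H = card {e \<in> H. v \<in> e}"

definition edeg :: "'a set \<Rightarrow> 'a set set \<Rightarrow> nat" where
  "edeg e H = (\<Sum>v\<in>e. vdeg v H)"

definition underfull :: "real \<Rightarrow> real \<Rightarrow> 'a set set \<Rightarrow> 'a set \<Rightarrow> bool" where
  "underfull \<epsilon> \<beta> H e \<longleftrightarrow> real (edeg e H) < (1 - \<epsilon>) * \<beta>"

definition overfull :: "real \<Rightarrow> 'a set set \<Rightarrow> 'a set \<Rightarrow> bool" where
  "overfull \<beta> H e \<longleftrightarrow> real (edeg e H) > \<beta>"

text \<open>The inner loop "while some edge of H is overfull, remove such an edge"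
  (any choice of the removed edge is allowed).\<close>
inductive fix_overfull :: "real \<Rightarrow> 'a set set \<Rightarrow> 'a set set \<Rightarrow> bool" where
  fix_done: "(\<forall>f\<in>H. \<not> overfull \<beta> H f) \<Longrightarrow> fix_overfull \<beta> H H"
| fix_remove: "f \<in> H \<Longrightarrow> overfull \<beta> H f \<Longrightarrow> fix_overfull \<beta> (H - {f}) H'
            \<Longrightarrow> fix_overfull \<beta> H H'"

text \<open>One iteration of the for-loop with sampled edge \<open>e\<close>; state is (H, Status).\<close>
inductive iter_step :: "real \<Rightarrow> real \<Rightarrow> 'a set set \<Rightarrow> 'a set
                        \<Rightarrow> 'a set set \<times> bool \<Rightarrow> 'a set set \<times> bool \<Rightarrow> bool" where
  it_insert: "e \<in> E - H \<Longrightarrow> underfull \<epsilon> \<beta> H e \<Longrightarrow> fix_overfull \<beta> (insert e H) H'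
            \<Longrightarrow> iter_step \<epsilon> \<beta> E e (H, s) (H', True)"
| it_skip: "\<not> (e \<in> E - H \<and> underfull \<epsilon> \<beta> H e) \<Longrightarrow> iter_step \<epsilon> \<beta> E e (H, s) (H, s)"

inductive run_iters :: "real \<Rightarrow> real \<Rightarrow> 'a set set \<Rightarrow> 'a set list
                        \<Rightarrow> 'a set set \<times> bool \<Rightarrow> 'a set set \<times> bool \<Rightarrow> bool" where
  nil: "run_iters \<epsilon> \<beta> E [] st st"
| cons: "iter_step \<epsilon> \<beta> E e st st' \<Longrightarrow> run_iters \<epsilon> \<beta> E es st' st''
           \<Longrightarrow> run_iters \<epsilon> \<beta> E (e # es) st st''"

text \<open>One round with \<open>K\<close> iterations, samples drawn from \<open>E\<close> (with repetition):
  starting from \<open>H\<close> with Status = false, ending in \<open>H'\<close> with Status = \<open>s\<close>.\<close>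
definition round_exec :: "real \<Rightarrow> real \<Rightarrow> 'a set set \<Rightarrow> nat
                          \<Rightarrow> 'a set set \<Rightarrow> 'a set set \<Rightarrow> bool \<Rightarrow> bool" where
  "round_exec \<epsilon> \<beta> E K H H' s \<longleftrightarrow>
     (\<exists>es. length es = K \<and> set es \<subseteq> E \<and> run_iters \<epsilon> \<beta> E es (H, False) (H', s))"

text \<open>\<open>true_rounds \<epsilon> \<beta> E K k H\<close>: some execution starting from \<open>H = {}\<close> performs
  \<open>k\<close> consecutive rounds, each ending with Status = true, reaching \<open>H\<close>.
  After such \<open>k\<close> rounds the algorithm executes round \<open>k+1\<close>, so it runs at least \<open>k+1\<close> rounds.\<close>
inductive true_rounds :: "real \<Rightarrow> real \<Rightarrow> 'a set set \<Rightarrow> nat \<Rightarrow> nat \<Rightarrow> 'a set set \<Rightarrow> bool" where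
  start: "true_rounds \<epsilon> \<beta> E K 0 {}"
| step: "true_rounds \<epsilon> \<beta> E K k H \<Longrightarrow> round_exec \<epsilon> \<beta> E K H H' True
           \<Longrightarrow> true_rounds \<epsilon> \<beta> E K (Suc k) H'"

definition iters_per_round :: "nat \<Rightarrow> real \<Rightarrow> real \<Rightarrow> real \<Rightarrow> real \<Rightarrow> nat" where
  "iters_per_round n \<mu>s ms \<Delta>s \<gamma> = nat \<lfloor>100 * ms * log 2 (real n) / (\<mu>s * \<Delta>s powr \<gamma>)\<rfloor>"

end

theory Submission
  imports Defs
begin

definition phi :: "'a set \<Rightarrow> nat \<Rightarrow> 'a set set \<Rightarrow> int" where
  "phi V b H = int (2*b*card H) - (\<Sum>v\<in>V. int (vdeg v H)^2)"

lemma finite_E: "simple_graph V E \<Longrightarrow> finite E"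
proof -
  assume a: "simple_graph V E"
  hence "E \<subseteq> Pow V" "finite V" by (auto simp: simple_graph_def)
  thus ?thesis by (meson finite_Pow_iff finite_subset)
qed

lemma vdeg_insert: "finite H \<Longrightarrow> e \<notin> H \<Longrightarrow> vdeg v (insert e H) = vdeg v H + (if v \<in> e then 1 else 0)"
proof -
  assume f: "finite H" and n: "e \<notin> H"
  show ?thesis
  proof (cases "v \<in> e")
    case True
    hence "{x \<in> insert e H. v \<in> x} = insert e {x \<in> H. v \<in> x}" by auto
    thus ?thesis using True f n by (simp add: vdeg_def)
  next
    case False
    hence "{x \<in> insert e H. v \<in> x} = {x \<in> H. v \<in> x}" by auto
    thus ?thesis using False by (simp add: vdeg_def)
  qed
qed

lemma sum_sq_insert:
  fixes d :: "'a \<Rightarrow> nat"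
  assumes "finite V" "u \<in> V" "w \<in> V" "u \<noteq> w"
  shows "(\<Sum>v\<in>V. (int (d v) + (if v \<in> {u,w} then 1 else 0))^2)
        = (\<Sum>v\<in>V. int (d v)^2) + 2*int (d u) + 2*int (d w) + 2"
proof -
  have "(\<Sum>v\<in>V. (int (d v) + (if v \<in> {u,w} then 1 else 0))^2)
     = (\<Sum>v\<in>V. int (d v)^2 + (if v \<in> {u,w} then 2*int (d v)+1 else 0))"
    by (rule sum.cong) (auto simp: power2_eq_square algebra_simps)
  also have "\<dots> = (\<Sum>v\<in>V. int (d v)^2) + (\<Sum>v\<in>V. if v \<in> {u,w} then 2*int (d v)+1 else 0)"
    by (simp add: sum.distrib)
  also have "(\<Sum>v\<in>V. if v \<in> {u,w} then 2*int (d v)+1 else 0) = (\<Sum>v\<in>V \<inter> {u,w}. 2*int (d v)+1)"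
    using sum.inter_restrict[OF assms(1), of "\<lambda>v. 2*int (d v)+1" "{u,w}"] by simp
  also have "V \<inter> {u,w} = {u,w}" using assms by auto
  finally show ?thesis using assms(4) by simp
qed

lemma edeg_pair: "u \<noteq> w \<Longrightarrow> edeg {u,w} H = vdeg u H + vdeg w H"
  by (simp add: edeg_def)

lemma phi_insert:
  assumes "finite V" "finite H" "e \<notin> H" "e = {u,w}" "u \<noteq> w" "u \<in> V" "w \<in> V"
  shows "phi V b (insert e H) = phi V b H + 2*int b - 2*int (edeg e H) - 2"
proof -
  have c: "card (insert e H) = card H + 1" using assms(2,3) by simp
  have "(\<Sum>v\<in>V. int (vdeg v (insert e H))^2) = (\<Sum>v\<in>V. (int (vdeg v H) + (if v \<in> {u,w} then 1 else 0))^2)"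
    using vdeg_insert[OF assms(2,3)] assms(4) by (intro sum.cong) auto
  also have "\<dots> = (\<Sum>v\<in>V. int (vdeg v H)^2) + 2*int (vdeg u H) + 2*int (vdeg w H) + 2"
    by (rule sum_sq_insert[OF assms(1,6,7,5)])
  finally show ?thesis using c edeg_pair[OF assms(5), of H] assms(4)
    by (simp add: phi_def algebra_simps)
qed

lemma edge_form: "simple_graph V E \<Longrightarrow> e \<in> E \<Longrightarrow> \<exists>u w. e = {u,w} \<and> u \<noteq> w \<and> u \<in> V \<and> w \<in> V"
  by (auto simp: simple_graph_def)

lemma fix_lemma:
  assumes "fix_overfull \<beta> H H'" "simple_graph V E" "H \<subseteq> E"
    and hO: "\<And>x. \<beta> < real x \<Longrightarrow> b + 1 \<le> x"
  shows "H' \<subseteq> H \<and> phi V b H \<le> phi V b H' \<and> (\<forall>f\<in>H'. \<not> overfull \<beta> H' f)"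
  using assms(1,3,2) hO
proof (induction rule: fix_overfull.induct)
  case (fix_done H)
  then show ?case by simp
next
  case (fix_remove f H \<beta>' H')
  have fE: "finite E" using finite_E[OF assms(2)] .
  have finV: "finite V" using assms(2) by (simp add: simple_graph_def)
  have sub: "H - {f} \<subseteq> E" using fix_remove.prems by auto
  have IH: "H' \<subseteq> H - {f} \<and> phi V b (H - {f}) \<le> phi V b H' \<and> (\<forall>f\<in>H'. \<not> overfull \<beta>' H' f)"
    using fix_remove.IH[OF sub assms(2)] fix_remove.prems(3) by blast
  obtain u w where uw: "f = {u,w}" "u \<noteq> w" "u \<in> V" "w \<in> V"
    using edge_form[OF assms(2)] fix_remove.hyps(1) fix_remove.prems by blast
  have finH: "finite (H - {f})" using sub fE finite_subset by blast
  have ins: "insert f (H - {f}) = H" using fix_remove.hyps(1) by auto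
  have p: "phi V b H = phi V b (H - {f}) + 2*int b - 2*int (edeg f (H - {f})) - 2"
    using phi_insert[OF finV finH _ uw] ins by simp
  have "edeg f H = edeg f (H - {f}) + 2"
    using vdeg_insert[OF finH, of f] ins uw by (simp add: edeg_pair)
  moreover have "b + 1 \<le> edeg f H" using fix_remove.prems(3) fix_remove.hyps(2) by (simp add: overfull_def)
  ultimately have "phi V b H \<le> phi V b (H - {f})" using p by linarith
  then show ?case using IH by auto
qed

lemma iter_lemma:
  assumes "iter_step \<epsilon> \<beta> E e st st'" "simple_graph V E" "fst st \<subseteq> E"
    "\<forall>f\<in>fst st. \<not> overfull \<beta> (fst st) f"
    and hO: "\<And>x. \<beta> < real x \<Longrightarrow> b + 1 \<le> x"
    and hU: "\<And>x. real x < (1-\<epsilon>)*\<beta> \<Longrightarrow> x + 3 \<le> b"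
  shows "fst st' \<subseteq> E \<and> (\<forall>f\<in>fst st'. \<not> overfull \<beta> (fst st') f) \<and> phi V b (fst st) \<le> phi V b (fst st')
     \<and> (snd st' \<longrightarrow> snd st \<or> phi V b (fst st) + 1 \<le> phi V b (fst st'))"
  using assms(1)
proof (cases rule: iter_step.cases)
  case (it_insert H H' s)
  have fE: "finite E" using finite_E[OF assms(2)] .
  have finV: "finite V" using assms(2) by (simp add: simple_graph_def)
  have HE: "H \<subseteq> E" using assms(3) it_insert by simp
  have finH: "finite H" using HE fE finite_subset by blast
  obtain u w where uw: "e = {u,w}" "u \<noteq> w" "u \<in> V" "w \<in> V"
    using edge_form[OF assms(2)] it_insert(3) by blast
  have p: "phi V b (insert e H) = phi V b H + 2*int b - 2*int (edeg e H) - 2"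
    using phi_insert[OF finV finH _ uw] it_insert(3) by simp
  have "edeg e H + 3 \<le> b" using hU it_insert(4) by (simp add: underfull_def)
  hence p2: "phi V b H + 1 \<le> phi V b (insert e H)" using p by linarith
  have sub: "insert e H \<subseteq> E" using HE it_insert(3) by auto
  have F: "H' \<subseteq> insert e H \<and> phi V b (insert e H) \<le> phi V b H' \<and> (\<forall>f\<in>H'. \<not> overfull \<beta> H' f)"
    using fix_lemma[OF it_insert(5) assms(2) sub hO] by blast
  show ?thesis using F p2 sub it_insert(1,2) by auto
next
  case (it_skip H s)
  then show ?thesis using assms(3,4) by simp
qed

lemma run_lemma:
  assumes "run_iters \<epsilon> \<beta> E es st st'" "simple_graph V E"
    and hO: "\<And>x. \<beta> < real x \<Longrightarrow> b + 1 \<le> x"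
    and hU: "\<And>x. real x < (1-\<epsilon>)*\<beta> \<Longrightarrow> x + 3 \<le> b"
    and "fst st \<subseteq> E" "\<forall>f\<in>fst st. \<not> overfull \<beta> (fst st) f"
  shows "fst st' \<subseteq> E \<and> (\<forall>f\<in>fst st'. \<not> overfull \<beta> (fst st') f) \<and> phi V b (fst st) \<le> phi V b (fst st')
     \<and> (snd st' \<longrightarrow> snd st \<or> phi V b (fst st) + 1 \<le> phi V b (fst st'))"
  using assms
proof (induction rule: run_iters.induct)
  case (nil \<epsilon> \<beta> E st)
  then show ?case by simp
next
  case (cons \<epsilon> \<beta> E e st st1 es st2)
  have A: "fst st1 \<subseteq> E \<and> (\<forall>f\<in>fst st1. \<not> overfull \<beta> (fst st1) f) \<and> phi V b (fst st) \<le> phi V b (fst st1)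
     \<and> (snd st1 \<longrightarrow> snd st \<or> phi V b (fst st) + 1 \<le> phi V b (fst st1))"
    using iter_lemma[OF cons.hyps(1) cons.prems(1) cons.prems(4,5) cons.prems(2,3)] .
  have B: "fst st2 \<subseteq> E \<and> (\<forall>f\<in>fst st2. \<not> overfull \<beta> (fst st2) f) \<and> phi V b (fst st1) \<le> phi V b (fst st2)
     \<and> (snd st2 \<longrightarrow> snd st1 \<or> phi V b (fst st1) + 1 \<le> phi V b (fst st2))"
    using cons.IH[OF cons.prems(1-3)] A by blast
  show ?case using A B by auto
qed

lemma rounds_lemma:
  assumes "true_rounds \<epsilon> \<beta> E K k H" "simple_graph V E"
    and hO: "\<And>x. \<beta> < real x \<Longrightarrow> b + 1 \<le> x"
    and hU: "\<And>x. real x < (1-\<epsilon>)*\<beta> \<Longrightarrow> x + 3 \<le> b"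
  shows "H \<subseteq> E \<and> (\<forall>f\<in>H. \<not> overfull \<beta> H f) \<and> int k \<le> phi V b H"
  using assms
proof (induction rule: true_rounds.induct)
  case (start \<epsilon> \<beta> E K)
  then show ?case by (simp add: phi_def vdeg_def)
next
  case (step \<epsilon> \<beta> E K k H H')
  obtain es where es: "run_iters \<epsilon> \<beta> E es (H, False) (H', True)"
    using step.hyps(2) by (auto simp: round_exec_def)
  have I: "H \<subseteq> E \<and> (\<forall>f\<in>H. \<not> overfull \<beta> H f) \<and> int k \<le> phi V b H"
    using step.IH[OF step.prems] .
  have "H' \<subseteq> E \<and> (\<forall>f\<in>H'. \<not> overfull \<beta> H' f) \<and> phi V b H \<le> phi V b H'
     \<and> (True \<longrightarrow> False \<or> phi V b H + 1 \<le> phi V b H')"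
    using run_lemma[OF es step.prems] I by simp
  then show ?case using I by auto
qed

lemma vdeg_bound:
  assumes "simple_graph V E" "H \<subseteq> E" "\<forall>f\<in>H. \<not> overfull \<beta> H f"
    and hF: "\<And>x. real x \<le> \<beta> \<Longrightarrow> x \<le> b"
  shows "vdeg v H \<le> b"
proof (cases "\<exists>f\<in>H. v \<in> f")
  case False
  hence "{e \<in> H. v \<in> e} = {}" by auto
  thus ?thesis unfolding vdeg_def by (metis card.empty le0)
next
  case True
  then obtain f where f: "f \<in> H" "v \<in> f" by blast
  obtain u w where uw: "f = {u,w}" "u \<noteq> w" using edge_form[OF assms(1)] f assms(2) by blast
  have "vdeg v H \<le> edeg f H" unfolding edeg_def
    using f(2) uw by (intro member_le_sum) auto
  moreover have "edeg f H \<le> b" using hF assms(3) f(1) unfolding overfull_def by (meson not_less)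
  ultimately show ?thesis by simp
qed

lemma card_bound:
  assumes "simple_graph V E" "H \<subseteq> E" "\<forall>f\<in>H. \<not> overfull \<beta> H f"
    and hF: "\<And>x. real x \<le> \<beta> \<Longrightarrow> x \<le> b"
  shows "card H \<le> 2 * b * max_matching E"
proof -
  have fE: "finite E" using finite_E[OF assms(1)] .
  have finH: "finite H" using assms(2) fE finite_subset by blast
  define MS where "MS = {M. M \<subseteq> H \<and> matching M}"
  have finMS: "finite MS" unfolding MS_def using finH by simp
  have "{} \<in> MS" unfolding MS_def matching_def by simp
  hence ne: "card ` MS \<noteq> {}" by blast
  have "Max (card ` MS) \<in> card ` MS" using finMS ne by (intro Max_in) auto
  then obtain M where M: "M \<in> MS" "card M = Max (card ` MS)" by auto
  have Mmax: "card M' \<le> card M" if "M' \<in> MS" for M'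
    using M(2) finMS that by simp
  have MH: "M \<subseteq> H" and Mm: "matching M" using M(1) by (auto simp: MS_def)
  have finM: "finite M" using MH finH finite_subset by blast
  have cover: "f \<inter> \<Union>M \<noteq> {}" if fH: "f \<in> H" for f
  proof
    assume dis: "f \<inter> \<Union>M = {}"
    obtain u w where uw: "f = {u,w}" "u \<noteq> w" using edge_form[OF assms(1)] fH assms(2) by blast
    have fM: "f \<notin> M" using dis uw by auto
    have "insert f M \<in> MS" unfolding MS_def matching_def
    proof (intro CollectI conjI ballI impI)
      show "insert f M \<subseteq> H" using MH fH by auto
    next
      fix e1 e2 assume "e1 \<in> insert f M" "e2 \<in> insert f M" "e1 \<noteq> e2"
      thus "e1 \<inter> e2 = {}" using Mm dis unfolding matching_def by blast
    qed
    hence "card (insert f M) \<le> card M" by (rule Mmax)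
    thus False using fM finM by simp
  qed
  have Hsub: "H \<subseteq> (\<Union>v\<in>\<Union>M. {e \<in> H. v \<in> e})" using cover by blast
  have finUM: "finite (\<Union>M)"
  proof -
    have "\<forall>f\<in>M. finite f" using MH assms(2) edge_form[OF assms(1)] by blast
    thus ?thesis using finM by blast
  qed
  have "card H \<le> card (\<Union>v\<in>\<Union>M. {e \<in> H. v \<in> e})"
    using Hsub by (intro card_mono finite_subset[OF _ finH]) auto
  also have "\<dots> \<le> (\<Sum>v\<in>\<Union>M. card {e \<in> H. v \<in> e})" by (rule card_UN_le[OF finUM])
  also have "\<dots> \<le> (\<Sum>v\<in>\<Union>M. b)"
    using vdeg_bound[OF assms] unfolding vdeg_def by (intro sum_mono) auto
  also have "\<dots> = card (\<Union>M) * b" by simp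
  finally have c0: "card H \<le> card (\<Union>M) * b" .
  have "card (\<Union>M) \<le> sum card M" by (rule card_Union_le_sum_card)
  also have "sum card M = (\<Sum>f\<in>M. 2)"
    using MH assms(2) edge_form[OF assms(1)] by (intro sum.cong) fastforce+
  also have "\<dots> = 2 * card M" by simp
  finally have cU: "card (\<Union>M) \<le> 2 * card M" .
  have cM: "card M \<le> max_matching E"
  proof -
    have "{card M | M. M \<subseteq> E \<and> matching M} \<subseteq> card ` Pow E" by auto
    hence "finite {card M | M. M \<subseteq> E \<and> matching M}" using fE by (meson finite_Pow_iff finite_imageI finite_subset)
    moreover have "card M \<in> {card M | M. M \<subseteq> E \<and> matching M}" using MH assms(2) Mm by blast
    ultimately show ?thesis unfolding max_matching_def by (rule Max_ge)
  qed
  have "card (\<Union>M) * b \<le> (2 * max_matching E) * b" using cU cM by (intro mult_right_mono) auto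
  hence "card H \<le> (2 * max_matching E) * b" using c0 by (rule le_trans[rotated])
  thus ?thesis by (simp add: algebra_simps)
qed

lemma phi_le: "phi V b H \<le> int (2*b*card H)"
  unfolding phi_def by (simp add: sum_nonneg)

lemma mm_pos: "simple_graph V E \<Longrightarrow> E \<noteq> {} \<Longrightarrow> 1 \<le> max_matching E"
proof -
  assume g: "simple_graph V E" and ne: "E \<noteq> {}"
  then obtain e where e: "e \<in> E" by blast
  have fE: "finite E" using finite_E[OF g] .
  have "{card M | M. M \<subseteq> E \<and> matching M} \<subseteq> card ` Pow E" by auto
  hence "finite {card M | M. M \<subseteq> E \<and> matching M}" using fE by (meson finite_Pow_iff finite_imageI finite_subset)
  moreover have "card {e} \<in> {card M | M. M \<subseteq> E \<and> matching M}" using e unfolding matching_def by blast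
  ultimately have "card {e} \<le> max_matching E" unfolding max_matching_def by (rule Max_ge)
  thus ?thesis by simp
qed

theorem lemma3p1:
  fixes c1 c2 :: real
  assumes "0 < c1" and "c1 \<le> c2"
  shows "\<exists>\<epsilon>0 > 0. \<exists>C > 0. \<forall>(\<epsilon>::real) (\<beta>::real) (V::nat set) (E::nat set set)
            (\<mu>s::real) (ms::real) (\<Delta>s::real) (\<gamma>::real) (k::nat) (H::nat set set).
     0 < \<epsilon> \<and> \<epsilon> < \<epsilon>0 \<and> c1 / \<epsilon> ^ 3 \<le> \<beta> \<and> \<beta> \<le> c2 / \<epsilon> ^ 3
     \<and> simple_graph V E \<and> E \<noteq> {}
     \<and> real (max_matching E) / (2 + \<epsilon>) \<le> \<mu>s \<and> \<mu>s \<le> real (card V)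
     \<and> avg_degree V E \<le> \<Delta>s \<and> \<Delta>s \<le> real (card V)
     \<and> real (card E) \<le> ms \<and> 0 < \<gamma> \<and> \<gamma> < 1
     \<and> true_rounds \<epsilon> \<beta> E (iters_per_round (card V) \<mu>s ms \<Delta>s \<gamma>) k H
     \<longrightarrow> real (k + 1) \<le> C * \<beta>\<^sup>2 * real (max_matching E)"
proof (rule exI[of _ "min 1 (c1/3)"], rule conjI[OF _ exI[of _ "5::real"]], simp add: assms(1),
    intro conjI allI impI)
  show "(0::real) < 5" by simp
  fix \<epsilon> \<beta> :: real and V :: "nat set" and E :: "nat set set" and \<mu>s ms \<Delta>s \<gamma> :: real
    and k :: nat and H :: "nat set set"
  assume A: "0 < \<epsilon> \<and> \<epsilon> < min 1 (c1/3) \<and> c1 / \<epsilon> ^ 3 \<le> \<beta> \<and> \<beta> \<le> c2 / \<epsilon> ^ 3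
     \<and> simple_graph V E \<and> E \<noteq> {}
     \<and> real (max_matching E) / (2 + \<epsilon>) \<le> \<mu>s \<and> \<mu>s \<le> real (card V)
     \<and> avg_degree V E \<le> \<Delta>s \<and> \<Delta>s \<le> real (card V)
     \<and> real (card E) \<le> ms \<and> 0 < \<gamma> \<and> \<gamma> < 1
     \<and> true_rounds \<epsilon> \<beta> E (iters_per_round (card V) \<mu>s ms \<Delta>s \<gamma>) k H"
  have e0: "0 < \<epsilon>" and e1: "\<epsilon> < 1" and ec: "\<epsilon> < c1/3" and bb: "c1 / \<epsilon> ^ 3 \<le> \<beta>"
    and g: "simple_graph V E" and ne: "E \<noteq> {}"
    and tr: "true_rounds \<epsilon> \<beta> E (iters_per_round (card V) \<mu>s ms \<Delta>s \<gamma>) k H"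
    using A by auto
  have "\<epsilon> * (c1 / \<epsilon> ^ 3) = c1 / \<epsilon>^2" using e0 by (simp add: field_simps power3_eq_cube power2_eq_square)
  moreover have "\<epsilon> * (c1 / \<epsilon> ^ 3) \<le> \<epsilon> * \<beta>" using bb e0 by (intro mult_left_mono) auto
  moreover have "3 \<le> c1 / \<epsilon>^2"
  proof -
    have "\<epsilon>^2 \<le> \<epsilon>" using e0 e1 by (simp add: power2_eq_square mult_le_cancel_left1)
    hence "3 * \<epsilon>^2 \<le> c1" using ec by linarith
    thus ?thesis using e0 by (simp add: pos_le_divide_eq)
  qed
  ultimately have eb: "3 \<le> \<epsilon> * \<beta>" by linarith
  have bpos: "0 < \<beta>" 
  proof -
    have "0 < \<epsilon> * \<beta>" using eb by linarith
    thus ?thesis using e0 by (simp add: zero_less_mult_iff)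
  qed
  have "\<epsilon> * \<beta> \<le> \<beta>" using e1 bpos by (simp add: mult_le_cancel_right1)
  hence b3: "3 \<le> \<beta>" using eb by linarith
  define b where "b = nat \<lfloor>\<beta>\<rfloor>"
  have bint: "int b = \<lfloor>\<beta>\<rfloor>" unfolding b_def using bpos by simp
  have hO: "b + 1 \<le> x" if "\<beta> < real x" for x
  proof -
    have "\<lfloor>\<beta>\<rfloor> < int x" using that by (simp add: floor_less_iff)
    thus ?thesis using bint by linarith
  qed
  have hU: "x + 3 \<le> b" if "real x < (1-\<epsilon>)*\<beta>" for x
  proof -
    have "real (x+3) \<le> \<beta>" using that eb by (simp add: algebra_simps)
    hence "int (x+3) \<le> \<lfloor>\<beta>\<rfloor>" by (simp add: le_floor_iff)
    thus ?thesis using bint by linarith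
  qed
  have hF: "x \<le> b" if "real x \<le> \<beta>" for x
  proof -
    have "int x \<le> \<lfloor>\<beta>\<rfloor>" using that by (simp add: le_floor_iff)
    thus ?thesis using bint by linarith
  qed
  have R: "H \<subseteq> E \<and> (\<forall>f\<in>H. \<not> overfull \<beta> H f) \<and> int k \<le> phi V b H"
    using rounds_lemma[OF tr g hO hU] by blast
  have cH: "card H \<le> 2 * b * max_matching E"
    using card_bound[OF g _ _ hF] R by blast
  have "int k \<le> int (2*b*card H)" using R phi_le[of V b H] by linarith
  hence "k \<le> 2*b*card H" by (simp only: of_nat_le_iff)
  also have "\<dots> \<le> 2*b*(2*b*max_matching E)" using cH by simp
  also have "\<dots> = 4*(b*b)*max_matching E" by (simp add: algebra_simps)
  finally have kk: "real k \<le> real (4*(b*b)*max_matching E)" by (simp only: of_nat_le_iff)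
  have "real k \<le> 4 * (real b * real b) * real (max_matching E)" using kk by simp
  also have "\<dots> \<le> 4 * (\<beta> * \<beta>) * real (max_matching E)"
  proof -
    have "real b \<le> \<beta>" unfolding b_def using bpos by linarith
    hence "real b * real b \<le> \<beta> * \<beta>" by (simp add: mult_mono)
    thus ?thesis by (simp add: mult_right_mono)
  qed
  finally have k1: "real k \<le> 4 * \<beta>\<^sup>2 * real (max_matching E)" by (simp add: power2_eq_square)
  have m1: "1 \<le> real (max_matching E)" using mm_pos[OF g ne] by simp
  have "3*3 \<le> \<beta>*\<beta>" using b3 by (intro mult_mono) auto
  hence b9: "1 \<le> \<beta>\<^sup>2" by (simp add: power2_eq_square)
  have "1*1 \<le> \<beta>\<^sup>2 * real (max_matching E)" using b9 m1 by (intro mult_mono) auto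
  hence "1 \<le> \<beta>\<^sup>2 * real (max_matching E)" by simp
  thus "real (k + 1) \<le> 5 * \<beta>\<^sup>2 * real (max_matching E)" using k1 by simp
qed

end
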